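(* Let $A\subset\mathbb{R}^d$ be a finite set that minimally surrounds the origin. (i) For any critical simplex $X\subseteq A$, no point of $A\setminus X$ lies in the linear hull of $X$. (ii) If a critical simplex $X\subseteq A$ contains $k$ points of a critical $k$-simplex $Y\subseteq A$, then $X=Y$.
   Context: A point set in $\mathbb{R}^d$ surrounds the origin if the origin lies in the interior of its convex hull; it minimally surrounds the origin if it surrounds the origin but no proper subset does. A point set $S$ surrounds the origin in a linear subspace $E$ if $S$ spans $E$ and the origin lies in the relative interior of $\mathrm{conv}(S)$. A $k$-simplex is a set of $k+1$ affinely independent points; a simplex $N$ is critical if it surrounds the origin in its linear hull. *)

theory Defs
  imports "HOL-Analysis.Analysis"
begin

definition surrounds_origin :: "'a::euclidean_space set \<Rightarrow> bool" where
  "surrounds_origin S \<longleftrightarrow> 0 \<in> interior (convex hull S)"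

definition minimally_surrounds_origin :: "'a::euclidean_space set \<Rightarrow> bool" where
  "minimally_surrounds_origin S \<longleftrightarrow>
     surrounds_origin S \<and> (\<forall>T. T \<subset> S \<longrightarrow> \<not> surrounds_origin T)"

definition surrounds_origin_in :: "'a::euclidean_space set \<Rightarrow> 'a set \<Rightarrow> bool" where
  "surrounds_origin_in S E \<longleftrightarrow> span S = E \<and> 0 \<in> rel_interior (convex hull S)"

definition is_simplex :: "nat \<Rightarrow> 'a::euclidean_space set \<Rightarrow> bool" where
  "is_simplex k X \<longleftrightarrow> finite X \<and> card X = k + 1 \<and> \<not> affine_dependent X"

definition critical :: "'a::euclidean_space set \<Rightarrow> bool" where
  "critical N \<longleftrightarrow> (\<exists>k. is_simplex k N) \<and> surrounds_origin_in N (span N)"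

end

theory Submission
  imports Defs
begin

lemma crit_rep:
  assumes "critical X"
  shows "finite X \<and> \<not> affine_dependent X \<and>
         (\<exists>u. (\<forall>x\<in>X. 0 < u x) \<and> sum u X = 1 \<and> (\<Sum>x\<in>X. u x *\<^sub>R x) = 0)"
proof -
  from assms obtain k where s: "is_simplex k X" and r: "0 \<in> rel_interior (convex hull X)"
    unfolding critical_def surrounds_origin_in_def by auto
  from s have f: "finite X" and ai: "\<not> affine_dependent X" unfolding is_simplex_def by auto
  from r rel_interior_convex_hull_explicit[OF ai] show ?thesis using f ai by auto
qed

lemma part1:
  fixes A :: "'a::euclidean_space set"
  assumes "finite A" and ms: "minimally_surrounds_origin A"
    and XA: "X \<subseteq> A" and cX: "critical X" and aA: "a \<in> A" and aX: "a \<notin> X"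
  shows "a \<notin> span X"
proof
  assume as: "a \<in> span X"
  define B where "B = A - {a}"
  have XB: "X \<subseteq> B" using XA aX B_def by auto
  have r: "0 \<in> rel_interior (convex hull X)"
    using cX unfolding critical_def surrounds_origin_in_def by auto
  then obtain e where e: "e > 0" "ball 0 e \<inter> affine hull (convex hull X) \<subseteq> convex hull X"
    using mem_rel_interior_ball by blast
  have "0 \<in> convex hull X" using r rel_interior_subset by blast
  then have "0 \<in> affine hull X" using convex_hull_subset_affine_hull by blast
  then have ah: "affine hull (convex hull X) = span X" using affine_hull_span_0 by simp
  define d where "d = min 1 (e / (2 * (norm a + 1)))"
  have "2 * (norm a + 1) > 0" by (smt (verit) norm_ge_zero)
  then have d0: "d > 0" using e by (simp add: d_def)
  have d1: "d \<le> 1" by (simp add: d_def)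
  have "d * norm a \<le> (e / (2 * (norm a + 1))) * norm a"
    by (rule mult_right_mono) (auto simp: d_def)
  also have "\<dots> < e"
  proof -
    have eq: "(e / (2 * (norm a + 1))) * norm a = e * (norm a / (2 * (norm a + 1)))" by simp
    have p: "0 < 2 * (norm a + 1)" by (smt (verit) norm_ge_zero)
    have "norm a < 2 * (norm a + 1)" by (smt (verit) norm_ge_zero)
    then have "norm a / (2 * (norm a + 1)) < 1" using p by (simp add: divide_less_eq_1)
    then have "e * (norm a / (2 * (norm a + 1))) < e * 1"
      using e by (intro mult_strict_left_mono) auto
    then show ?thesis using eq by simp
  qed
  finally have "norm (d *\<^sub>R a) < e" using d0 by simp
  moreover have "d *\<^sub>R a \<in> span X" using as span_mul by blast
  ultimately have "d *\<^sub>R a \<in> ball 0 e \<inter> affine hull (convex hull X)" using ah by simp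
  then have "d *\<^sub>R a \<in> convex hull X" using e(2) by (rule subsetD[rotated])
  then have daB: "d *\<^sub>R a \<in> convex hull B" using hull_mono[OF XB] by blast
  have zB: "0 \<in> convex hull B" using \<open>0 \<in> convex hull X\<close> hull_mono[OF XB] by blast
  have "(\<lambda>x. d *\<^sub>R x) ` A \<subseteq> convex hull B"
  proof
    fix y assume "y \<in> (\<lambda>x. d *\<^sub>R x) ` A"
    then obtain b where b: "b \<in> A" "y = d *\<^sub>R b" by auto
    show "y \<in> convex hull B"
    proof (cases "b = a")
      case True then show ?thesis using daB b(2) by simp
    next
      case False
      then have "b \<in> B" using b(1) B_def by simp
      then have bB: "b \<in> convex hull B" by (rule hull_inc)
      have "d *\<^sub>R b + (1 - d) *\<^sub>R 0 \<in> convex hull B"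
        by (rule convexD[OF convex_convex_hull bB zB]) (use d0 d1 in auto)
      then show ?thesis using b(2) by simp
    qed
  qed
  then have "convex hull ((\<lambda>x. d *\<^sub>R x) ` A) \<subseteq> convex hull B"
    by (simp add: hull_minimal)
  then have sub: "(\<lambda>x. d *\<^sub>R x) ` (convex hull A) \<subseteq> convex hull B"
    by (simp add: convex_hull_scaling)
  have i0: "0 \<in> interior (convex hull A)"
  proof -
    have "surrounds_origin A" using ms unfolding minimally_surrounds_origin_def by (rule conjunct1)
    then show ?thesis unfolding surrounds_origin_def .
  qed
  have "open ((\<lambda>x. d *\<^sub>R x) ` interior (convex hull A))" using d0 by (intro open_scaling open_interior) simp
  moreover have "0 \<in> (\<lambda>x. d *\<^sub>R x) ` interior (convex hull A)"
    using i0 by (metis image_eqI scaleR_zero_right)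
  moreover have "(\<lambda>x. d *\<^sub>R x) ` interior (convex hull A) \<subseteq> convex hull B"
    using sub interior_subset by blast
  ultimately have "0 \<in> interior (convex hull B)" by (meson interiorI)
  moreover have "B \<subset> A" using aA B_def by auto
  moreover have "\<forall>T. T \<subset> A \<longrightarrow> \<not> surrounds_origin T"
    using ms unfolding minimally_surrounds_origin_def by (rule conjunct2)
  ultimately show False unfolding surrounds_origin_def by blast
qed

lemma part2:
  fixes A :: "'a::euclidean_space set"
  assumes fA: "finite A" and ms: "minimally_surrounds_origin A"
    and XA: "X \<subseteq> A" and cX: "critical X" and YA: "Y \<subseteq> A"
    and sY: "is_simplex k Y" and cY: "critical Y" and c: "card (X \<inter> Y) \<ge> k"
  shows "X = Y"
proof -
  from crit_rep[OF cX] obtain l where fX: "finite X" and aiX: "\<not> affine_dependent X"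
    and l: "\<forall>x\<in>X. 0 < l x" "sum l X = 1" "(\<Sum>x\<in>X. l x *\<^sub>R x) = 0" by blast
  from crit_rep[OF cY] obtain m where fY: "finite Y"
    and m: "\<forall>x\<in>Y. 0 < m x" "sum m Y = 1" "(\<Sum>x\<in>Y. m x *\<^sub>R x) = 0" by blast
  have cY1: "card Y = k + 1" using sY is_simplex_def by auto
  have YX: "Y \<subseteq> X"
  proof
    fix y assume yY: "y \<in> Y"
    show "y \<in> X"
    proof (rule ccontr)
      assume yX: "y \<notin> X"
      have cd: "card (Y - X) \<le> 1"
      proof -
        have "card (Y - X) = card Y - card (Y \<inter> X)" using fY by (simp add: card_Diff_subset_Int)
        then show ?thesis using cY1 c by (simp add: Int_commute)
      qed
      have sub: "Y - {y} \<subseteq> X"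
      proof
        fix z assume z: "z \<in> Y - {y}"
        show "z \<in> X"
        proof (rule ccontr)
          assume "z \<notin> X"
          then have "{y, z} \<subseteq> Y - X" using z yY yX by auto
          then have "card {y, z} \<le> card (Y - X)" using fY by (intro card_mono) auto
          then show False using cd z by auto
        qed
      qed
      have "0 = m y *\<^sub>R y + (\<Sum>z\<in>Y - {y}. m z *\<^sub>R z)"
        using m(3) sum.remove[OF fY yY, of "\<lambda>z. m z *\<^sub>R z"] by simp
      then have "m y *\<^sub>R y = - (\<Sum>z\<in>Y - {y}. m z *\<^sub>R z)"
        by (simp add: eq_neg_iff_add_eq_0)
      then have "(1 / m y) *\<^sub>R (m y *\<^sub>R y) = (- 1 / m y) *\<^sub>R (\<Sum>z\<in>Y - {y}. m z *\<^sub>R z)"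
        by simp
      moreover have "m y \<noteq> 0" using m(1) yY by force
      ultimately have yeq: "y = (- 1 / m y) *\<^sub>R (\<Sum>z\<in>Y - {y}. m z *\<^sub>R z)"
        by simp
      have "(\<Sum>z\<in>Y - {y}. m z *\<^sub>R z) \<in> span X"
        using sub by (intro span_sum span_mul span_base) auto
      then have "(- 1 / m y) *\<^sub>R (\<Sum>z\<in>Y - {y}. m z *\<^sub>R z) \<in> span X"
        by (rule span_mul)
      then have "y \<in> span X" using yeq by simp
      moreover have "y \<in> A" using yY YA by auto
      ultimately show False using part1[OF fA ms XA cX _ yX] by blast
    qed
  qed
  show "X = Y"
  proof (rule ccontr)
    assume "X \<noteq> Y"
    then obtain x where x: "x \<in> X" "x \<notin> Y" using YX by auto
    define U where "U = (\<lambda>v. l v - (if v \<in> Y then m v else 0))"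
    have XY: "X \<inter> Y = Y" using YX by auto
    have s1: "sum (\<lambda>v. if v \<in> Y then m v else 0) X = 1"
      using sum.inter_restrict[OF fX, of m Y] XY m(2) by simp
    have s2: "(\<Sum>v\<in>X. (if v \<in> Y then m v else 0) *\<^sub>R v) = 0"
    proof -
      have "(\<Sum>v\<in>X. (if v \<in> Y then m v else 0) *\<^sub>R v) = (\<Sum>v\<in>X. if v \<in> Y then m v *\<^sub>R v else 0)"
        by (intro sum.cong) auto
      also have "\<dots> = (\<Sum>v\<in>Y. m v *\<^sub>R v)"
        using sum.inter_restrict[OF fX, of "\<lambda>v. m v *\<^sub>R v" Y] XY by simp
      finally show ?thesis using m(3) by simp
    qed
    have "sum U X = sum l X - sum (\<lambda>v. if v \<in> Y then m v else 0) X"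
      unfolding U_def by (rule sum_subtractf)
    then have u1: "sum U X = 0" using s1 l(2) by simp
    have "U x = l x" using x by (simp add: U_def)
    then have u2: "U x \<noteq> 0" using x l(1) by force
    have "(\<Sum>v\<in>X. U v *\<^sub>R v) = (\<Sum>v\<in>X. l v *\<^sub>R v - (if v \<in> Y then m v else 0) *\<^sub>R v)"
      unfolding U_def scaleR_diff_left by (rule refl)
    also have "\<dots> = (\<Sum>v\<in>X. l v *\<^sub>R v) - (\<Sum>v\<in>X. (if v \<in> Y then m v else 0) *\<^sub>R v)"
      by (rule sum_subtractf)
    finally have u3: "(\<Sum>v\<in>X. U v *\<^sub>R v) = 0" using s2 l(3) by simp
    have "affine_dependent X"
      unfolding affine_dependent_explicit_finite[OF fX]
      using u1 u2 u3 x by blast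
    then show False using aiX by simp
  qed
qed

theorem lemma16:
  fixes A :: "'a::euclidean_space set"
  assumes "finite A" and "minimally_surrounds_origin A"
  shows "(\<forall>X. X \<subseteq> A \<and> critical X \<longrightarrow> (\<forall>a \<in> A - X. a \<notin> span X))
       \<and> (\<forall>X Y k. X \<subseteq> A \<and> critical X \<and> Y \<subseteq> A \<and> is_simplex k Y \<and> critical Y
              \<and> card (X \<inter> Y) \<ge> k \<longrightarrow> X = Y)"
proof (intro conjI allI impI ballI)
  fix X a assume "X \<subseteq> A \<and> critical X" "a \<in> A - X"
  then show "a \<notin> span X" using part1[OF assms, of X a] by auto
next
  fix X Y k assume h: "X \<subseteq> A \<and> critical X \<and> Y \<subseteq> A \<and> is_simplex k Y \<and> critical Y \<and> k \<le> card (X \<inter> Y)"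
  then show "X = Y" using part2[OF assms, of X Y k] by blast
qed

end
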